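(* Let $R$ be an associative ring with identity. The following are equivalent: (1) $R$ is NJ-symmetric; (2) for all $a,b,c\in R$, $abc\in N(R)$ implies $acb\in J(R)$; (3) for all $a,b,c\in R$, $abc\in N(R)$ implies $cba\in J(R)$.
   Context: $N(R)$ is the set of nilpotent elements of $R$ and $J(R)$ is the Jacobson radical of $R$. A ring $R$ is called NJ-symmetric if for all $a,b,c\in R$, $abc\in N(R)$ implies $bac\in J(R)$. *)

theory Defs
  imports Main
begin

definition nilpotents :: "'a::ring_1 set" where
  "nilpotents = {x. \<exists>n::nat. x ^ n = 0}"

definition left_ideal :: "'a::ring_1 set \<Rightarrow> bool" where
  "left_ideal I \<longleftrightarrow> 0 \<in> I \<and> (\<forall>x\<in>I. \<forall>y\<in>I. x - y \<in> I) \<and> (\<forall>r. \<forall>x\<in>I. r * x \<in> I)"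

definition maximal_left_ideal :: "'a::ring_1 set \<Rightarrow> bool" where
  "maximal_left_ideal M \<longleftrightarrow> left_ideal M \<and> M \<noteq> UNIV \<and>
     (\<forall>I. left_ideal I \<and> M \<subseteq> I \<and> I \<noteq> UNIV \<longrightarrow> I = M)"

definition jacobson :: "'a::ring_1 set" where
  "jacobson = \<Inter> {M. maximal_left_ideal M}"

definition NJ_symmetric :: "'a::ring_1 itself \<Rightarrow> bool" where
  "NJ_symmetric _ \<longleftrightarrow> (\<forall>a b c :: 'a. a * b * c \<in> nilpotents \<longrightarrow> b * a * c \<in> jacobson)"

end

theory Submission
  imports Defs
begin

lemma pow_shift: "(y::'a::ring_1) * (x * y) ^ n = (y * x) ^ n * y"
  by (induction n) (simp_all add: mult.assoc power_commutes)

lemma nil_swap: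
  assumes "(x::'a::ring_1) * y \<in> nilpotents" shows "y * x \<in> nilpotents"
proof -
  from assms obtain n where n: "(x * y) ^ n = 0" by (auto simp: nilpotents_def)
  have "(y * x) ^ Suc n = (y * x) ^ n * y * x" by (simp only: power_Suc2 mult.assoc)
  also have "\<dots> = y * (x * y) ^ n * x" by (simp only: pow_shift)
  also have "\<dots> = 0" using n by simp
  finally show ?thesis unfolding nilpotents_def by blast
qed

lemma rot:
  assumes "(a::'a::ring_1) * b * c \<in> nilpotents"
  shows "b * c * a \<in> nilpotents" "c * a * b \<in> nilpotents"
proof -
  have "a * (b * c) \<in> nilpotents" using assms by (simp add: mult.assoc)
  then show 1: "b * c * a \<in> nilpotents" using nil_swap by blast
  have "b * (c * a) \<in> nilpotents" using 1 by (simp add: mult.assoc)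
  then show "c * a * b \<in> nilpotents" using nil_swap by blast
qed

theorem proposition2p2:
  shows "(NJ_symmetric TYPE('a::ring_1) \<longrightarrow>
            (\<forall>a b c :: 'a. a * b * c \<in> nilpotents \<longrightarrow> a * c * b \<in> jacobson)) \<and>
         ((\<forall>a b c :: 'a. a * b * c \<in> nilpotents \<longrightarrow> a * c * b \<in> jacobson) \<longrightarrow>
            (\<forall>a b c :: 'a. a * b * c \<in> nilpotents \<longrightarrow> c * b * a \<in> jacobson)) \<and>
         ((\<forall>a b c :: 'a. a * b * c \<in> nilpotents \<longrightarrow> c * b * a \<in> jacobson) \<longrightarrow>
            NJ_symmetric TYPE('a))"
  unfolding NJ_symmetric_def using rot by blast

end
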